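(* Let $X$, $(Y_j)_{j\in\varGamma}$ and $(P_j)_{j\in\varGamma}$ satisfy: each $P_j:X\to Y_j$ is a bounded linear projection onto the closed subspace $Y_j$; $P_j\circ P_i=0$ for $i\neq j$; and $x\mapsto(P_j(x))_{j}$ is a bounded injective linear operator $X\to\left(\bigoplus_jY_j\right)_{c_0}$. Let $A=\sup_j\|P_j\|$ (which is finite). For $x\neq0$ choose $\beta(x)\in\varGamma$ with $\|P_{\beta(x)}(x)\|=\max_{i\in\varGamma}\|P_i(x)\|$, and define $R:X\to\bigcup_{j}Y_j$ by $R(0)=0$ and, for $x\neq0$, \[R(x)=\left(1-\max_{i\neq\beta(x)}\frac{\|P_i(x)\|}{\|P_{\beta(x)}(x)\|}\right)P_{\beta(x)}(x).\] Then $R$ is well defined (independent of the choice of $\beta(x)$), $R\circ R=R$, $R$ is the identity on $\bigcup_jY_j$, and $\|R(x)-R(y)\|\le 3A\|x-y\|$ for all $x,y\in X$.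
   Context: $\left(\bigoplus_jY_j\right)_{c_0}$ is the space of families $(y_j)$, $y_j\in Y_j$, such that for every $\epsilon>0$ only finitely many $\|y_j\|\ge\epsilon$, with the sup norm. *)

theory Defs
  imports "HOL-Analysis.Analysis"
begin

definition is_max_index :: "('j \<Rightarrow> 'a \<Rightarrow> 'a::real_normed_vector) \<Rightarrow> 'j set \<Rightarrow> 'a \<Rightarrow> 'j \<Rightarrow> bool" where
  "is_max_index P G x j \<longleftrightarrow> j \<in> G \<and> (\<forall>i\<in>G. norm (P i x) \<le> norm (P j x))"

text \<open>max over i in G, i ~= b, of norm (P i x); the maximum over the empty index set is taken to be 0.\<close>
definition other_max :: "('j \<Rightarrow> 'a \<Rightarrow> 'a::real_normed_vector) \<Rightarrow> 'j set \<Rightarrow> 'a \<Rightarrow> 'j \<Rightarrow> real" where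
  "other_max P G x b = Sup (insert 0 ((\<lambda>i. norm (P i x)) ` (G - {b})))"

definition Rmap :: "('j \<Rightarrow> 'a \<Rightarrow> 'a::real_normed_vector) \<Rightarrow> 'j set \<Rightarrow> ('a \<Rightarrow> 'j) \<Rightarrow> 'a \<Rightarrow> 'a" where
  "Rmap P G \<beta> x = (if x = 0 then 0
      else (1 - other_max P G x (\<beta> x) / norm (P (\<beta> x) x)) *\<^sub>R P (\<beta> x) x)"

end

theory Submission
  imports Defs
begin


lemma om_bounds:
  assumes "is_max_index P G x b"
  shows "0 \<le> other_max P G x b \<and> other_max P G x b \<le> norm (P b x)"
proof -
  let ?S = "insert 0 ((\<lambda>i. norm (P i x)) ` (G - {b}))"
  have ub: "\<forall>s\<in>?S. s \<le> norm (P b x)" using assms unfolding is_max_index_def by auto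
  hence bd: "bdd_above ?S" by (meson bdd_above.I)
  have "0 \<le> Sup ?S" by (rule cSup_upper[OF _ bd]) simp
  moreover have "Sup ?S \<le> norm (P b x)" by (rule cSup_least) (use ub in auto)
  ultimately show ?thesis unfolding other_max_def by simp
qed

lemma om_ge:
  assumes "is_max_index P G x b" "c \<in> G" "c \<noteq> b"
  shows "norm (P c x) \<le> other_max P G x b"
proof -
  let ?S = "insert 0 ((\<lambda>i. norm (P i x)) ` (G - {b}))"
  have ub: "\<forall>s\<in>?S. s \<le> norm (P b x)" using assms unfolding is_max_index_def by auto
  hence bd: "bdd_above ?S" by (meson bdd_above.I)
  show ?thesis unfolding other_max_def by (rule cSup_upper[OF _ bd]) (use assms in auto)
qed

lemma om_le_shift:
  assumes "is_max_index P G x b" "is_max_index P G y b"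
    and D: "\<forall>i\<in>G. norm (P i x) \<le> norm (P i y) + D" and "0 \<le> D"
  shows "other_max P G x b \<le> other_max P G y b + D"
proof -
  have "Sup (insert 0 ((\<lambda>i. norm (P i x)) ` (G - {b}))) \<le> other_max P G y b + D"
  proof (rule cSup_least)
    fix s assume "s \<in> insert 0 ((\<lambda>i. norm (P i x)) ` (G - {b}))"
    then show "s \<le> other_max P G y b + D"
    proof
      assume "s = 0" then show ?thesis using om_bounds[OF assms(2)] \<open>0 \<le> D\<close> by simp
    next
      assume "s \<in> (\<lambda>i. norm (P i x)) ` (G - {b})"
      then obtain i where i: "i \<in> G" "i \<noteq> b" "s = norm (P i x)" by auto
      then show ?thesis using D om_ge[OF assms(2) i(1,2)] by force
    qed
  qed simp
  then show ?thesis unfolding other_max_def .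
qed

lemma om_lip:
  assumes "is_max_index P G x b" "is_max_index P G y b"
    and D: "\<forall>i\<in>G. norm (P i x - P i y) \<le> D"
  shows "\<bar>other_max P G x b - other_max P G y b\<bar> \<le> D"
proof -
  have bG: "b \<in> G" using assms(1) unfolding is_max_index_def by auto
  have D0: "0 \<le> D" using D bG by (meson norm_ge_zero order_trans)
  have "\<forall>i\<in>G. norm (P i x) \<le> norm (P i y) + D"
    using D by (metis add.commute norm_triangle_ineq2 diff_le_eq order_trans)
  moreover have "\<forall>i\<in>G. norm (P i y) \<le> norm (P i x) + D"
    using D by (metis add.commute norm_triangle_ineq3 norm_minus_commute abs_le_D1 diff_le_eq order_trans)
  ultimately show ?thesis using om_le_shift[OF assms(1,2) _ D0] om_le_shift[OF assms(2,1) _ D0] by linarith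
qed

lemma key_same:
  fixes P :: "'j \<Rightarrow> 'a::real_normed_vector \<Rightarrow> 'a"
  assumes mx: "is_max_index P G x b" and my: "is_max_index P G y b"
    and pos: "0 < norm (P b y)" and le: "norm (P b y) \<le> norm (P b x)"
    and D: "\<forall>i\<in>G. norm (P i x - P i y) \<le> D"
  shows "norm ((1 - other_max P G x b / norm (P b x)) *\<^sub>R P b x
             - (1 - other_max P G y b / norm (P b y)) *\<^sub>R P b y) \<le> 3 * D"
proof -
  define a where "a = norm (P b x)"
  define a' where "a' = norm (P b y)"
  define p where "p = P b x"
  define q where "q = P b y"
  define m where "m = other_max P G x b"
  define m' where "m' = other_max P G y b"
  have bG: "b \<in> G" using mx unfolding is_max_index_def by auto
  have a'pos: "0 < a'" using pos a'_def by simp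
  have aa': "a' \<le> a" using le a_def a'_def by simp
  have apos: "0 < a" using a'pos aa' by simp
  have m0: "0 \<le> m" "m \<le> a" using om_bounds[OF mx] m_def a_def by auto
  have pq: "norm (p - q) \<le> D" using D bG p_def q_def by auto
  have mm: "\<bar>m - m'\<bar> \<le> D" using om_lip[OF mx my D] m_def m'_def by simp
  have aa'2: "a - a' \<le> D" using pq a_def a'_def p_def q_def
    by (metis norm_triangle_ineq2 order_trans)
  have eq: "(1 - m / a) *\<^sub>R p - (1 - m' / a') *\<^sub>R q = (1 - m/a) *\<^sub>R (p - q) + (m'/a' - m/a) *\<^sub>R q"
    by (simp add: algebra_simps)
  have c1: "\<bar>1 - m/a\<bar> \<le> 1" using m0 apos by (simp add: abs_if field_simps)
  have "norm ((1 - m/a) *\<^sub>R (p - q)) \<le> D"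
    using c1 pq by (simp add: mult_le_one order_trans[OF mult_right_mono[OF c1 norm_ge_zero]])
  moreover have "norm ((m'/a' - m/a) *\<^sub>R q) = \<bar>m' - m * a'/a\<bar>"
  proof -
    have "norm ((m'/a' - m/a) *\<^sub>R q) = \<bar>m'/a' - m/a\<bar> * a'" using q_def a'_def by simp
    also have "\<dots> = \<bar>(m'/a' - m/a) * a'\<bar>" using a'pos by (simp add: abs_mult)
    also have "(m'/a' - m/a) * a' = m' - m * a'/a" using a'pos by (simp add: field_simps)
    finally show ?thesis .
  qed
  moreover have "\<bar>m' - m * a'/a\<bar> \<le> 2 * D"
  proof -
    have e: "m' - m * a'/a = (m' - m) + (m/a) * (a - a')" using apos by (simp add: field_simps)
    have "0 \<le> m/a" "m/a \<le> 1" using m0 apos by auto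
    hence "\<bar>(m/a) * (a - a')\<bar> \<le> a - a'" using aa'
      by (metis abs_of_nonneg diff_ge_0_iff_ge mult_left_le_one_le zero_le_mult_iff)
    moreover have "\<bar>(m' - m) + (m/a) * (a - a')\<bar> \<le> \<bar>m' - m\<bar> + \<bar>(m/a) * (a - a')\<bar>"
      by (rule abs_triangle_ineq)
    moreover have "\<bar>m' - m\<bar> = \<bar>m - m'\<bar>" by simp
    ultimately show ?thesis unfolding e using mm aa'2
      by (smt (verit))
  qed
  ultimately have "norm ((1 - m / a) *\<^sub>R p - (1 - m' / a') *\<^sub>R q) \<le> 3 * D"
    unfolding eq by (smt (verit) norm_triangle_ineq)
  thus ?thesis unfolding a_def a'_def p_def q_def m_def m'_def .
qed

lemma Rmap_norm:
  fixes P :: "'j \<Rightarrow> 'a::real_normed_vector \<Rightarrow> 'a"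
  assumes "x \<noteq> 0" "is_max_index P G x (\<beta> x)" "0 < norm (P (\<beta> x) x)"
  shows "norm (Rmap P G \<beta> x) = norm (P (\<beta> x) x) - other_max P G x (\<beta> x)"
proof -
  have b: "0 \<le> other_max P G x (\<beta> x)" "other_max P G x (\<beta> x) \<le> norm (P (\<beta> x) x)"
    using om_bounds[OF assms(2)] by auto
  have "0 \<le> 1 - other_max P G x (\<beta> x) / norm (P (\<beta> x) x)" using b assms(3) by simp
  hence "norm (Rmap P G \<beta> x) = (1 - other_max P G x (\<beta> x) / norm (P (\<beta> x) x)) * norm (P (\<beta> x) x)"
    using assms(1) unfolding Rmap_def by simp
  also have "\<dots> = norm (P (\<beta> x) x) - other_max P G x (\<beta> x)" using assms(3) by (simp add: field_simps)
  finally show ?thesis .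
qed

lemma Rmap_lip:
  fixes P :: "'j \<Rightarrow> 'a::real_normed_vector \<Rightarrow> 'a"
  assumes beta: "\<forall>x. x \<noteq> 0 \<longrightarrow> is_max_index P G x (\<beta> x)"
    and inj: "\<forall>x. (\<forall>j\<in>G. P j x = 0) \<longrightarrow> x = 0"
    and L: "\<forall>i\<in>G. \<forall>x y. norm (P i x - P i y) \<le> A * norm (x - y)"
    and P0: "\<forall>i\<in>G. P i 0 = 0"
  shows "norm (Rmap P G \<beta> x - Rmap P G \<beta> y) \<le> 3 * A * norm (x - y)"
proof -
  have pos: "0 < norm (P (\<beta> z) z)" if "z \<noteq> 0" for z
  proof (rule ccontr)
    assume "\<not> 0 < norm (P (\<beta> z) z)"
    hence "\<forall>j\<in>G. P j z = 0" using beta that unfolding is_max_index_def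
      by (metis norm_le_zero_iff order_trans not_less)
    thus False using inj that by auto
  qed
  have bnd: "norm (Rmap P G \<beta> z) \<le> A * norm z" if "z \<noteq> 0" for z
  proof -
    have mz: "is_max_index P G z (\<beta> z)" using beta that by auto
    hence bG: "\<beta> z \<in> G" unfolding is_max_index_def by auto
    have "norm (Rmap P G \<beta> z) \<le> norm (P (\<beta> z) z)"
      using Rmap_norm[where \<beta>=\<beta>, OF that mz pos[OF that]] om_bounds[OF mz] by simp
    also have "\<dots> \<le> A * norm z" using L bG P0 by (metis diff_zero)
    finally show ?thesis .
  qed
  have A0: "0 \<le> A" if "z \<noteq> 0" for z :: 'a
  proof -
    have "0 \<le> A * norm z" using bnd[OF that] norm_ge_zero order_trans by blast
    thus ?thesis using that by (simp add: zero_le_mult_iff)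
  qed
  show ?thesis
  proof (cases "x = 0")
    case True
    show ?thesis
    proof (cases "y = 0")
      case True thus ?thesis using \<open>x = 0\<close> by (simp add: Rmap_def)
    next
      case False
      thus ?thesis using \<open>x = 0\<close> bnd[OF False] A0[OF False]
        by (simp add: Rmap_def) (smt (verit) mult_right_mono norm_ge_zero)
    qed
  next
    case xn: False
    show ?thesis
    proof (cases "y = 0")
      case True thus ?thesis using xn bnd[OF xn] A0[OF xn]
        by (simp add: Rmap_def) (smt (verit) mult_right_mono norm_ge_zero)
    next
      case yn: False
      have mx: "is_max_index P G x (\<beta> x)" and my: "is_max_index P G y (\<beta> y)" using beta xn yn by auto
      have D: "\<forall>i\<in>G. norm (P i x - P i y) \<le> A * norm (x - y)" using L by auto
      have D': "\<forall>i\<in>G. norm (P i y - P i x) \<le> A * norm (x - y)" using L by (metis norm_minus_commute)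
      have A0': "0 \<le> A * norm (x - y)" using A0[OF xn] by simp
      show ?thesis
      proof (cases "\<beta> x = \<beta> y")
        case True
        have my': "is_max_index P G y (\<beta> x)" using my True by simp
        have Rx: "Rmap P G \<beta> x = (1 - other_max P G x (\<beta> x) / norm (P (\<beta> x) x)) *\<^sub>R P (\<beta> x) x"
          using xn by (simp add: Rmap_def)
        have Ry: "Rmap P G \<beta> y = (1 - other_max P G y (\<beta> x) / norm (P (\<beta> x) y)) *\<^sub>R P (\<beta> x) y"
          using yn True by (simp add: Rmap_def)
        show ?thesis
        proof (cases "norm (P (\<beta> x) y) \<le> norm (P (\<beta> x) x)")
          case True
          have "0 < norm (P (\<beta> x) y)" using pos[OF yn] \<open>\<beta> x = \<beta> y\<close> by simp
          from key_same[OF mx my' this True D] show ?thesis unfolding Rx Ry by simp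
        next
          case False
          hence le: "norm (P (\<beta> x) x) \<le> norm (P (\<beta> x) y)" by simp
          from key_same[OF my' mx pos[OF xn] le D'] show ?thesis unfolding Rx Ry
            by (simp add: norm_minus_commute)
        qed
      next
        case ne: False
        have bx: "\<beta> x \<in> G" and by': "\<beta> y \<in> G" using mx my unfolding is_max_index_def by auto
        have "norm (Rmap P G \<beta> x - Rmap P G \<beta> y) \<le> norm (Rmap P G \<beta> x) + norm (Rmap P G \<beta> y)"
          by (rule norm_triangle_ineq4)
        also have "\<dots> = (norm (P (\<beta> x) x) - other_max P G x (\<beta> x)) + (norm (P (\<beta> y) y) - other_max P G y (\<beta> y))"
          using Rmap_norm[where \<beta>=\<beta>, OF xn mx pos[OF xn]] Rmap_norm[where \<beta>=\<beta>, OF yn my pos[OF yn]] by simp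
        also have "\<dots> \<le> (norm (P (\<beta> x) x) - norm (P (\<beta> y) x)) + (norm (P (\<beta> y) y) - norm (P (\<beta> x) y))"
          using om_ge[OF mx by' ne[symmetric]] om_ge[OF my bx ne] by simp
        also have "\<dots> \<le> norm (P (\<beta> x) x - P (\<beta> x) y) + norm (P (\<beta> y) y - P (\<beta> y) x)"
          by (smt (verit) norm_triangle_ineq2)
        also have "\<dots> \<le> 2 * (A * norm (x - y))" using D[rule_format, OF bx] D'[rule_format, OF by'] by simp
        also have "\<dots> \<le> 3 * A * norm (x - y)" using A0' by simp
        finally show ?thesis .
      qed
    qed
  qed
qed


theorem mainTheorem9:
  fixes P :: "'j \<Rightarrow> 'a::real_normed_vector \<Rightarrow> 'a"
    and Y :: "'j \<Rightarrow> 'a set"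
    and G :: "'j set"
    and \<beta> :: "'a \<Rightarrow> 'j"
  assumes lin: "\<forall>j\<in>G. bounded_linear (P j)"
    and Ysub: "\<forall>j\<in>G. subspace (Y j) \<and> closed (Y j)"
    and Prange: "\<forall>j\<in>G. range (P j) = Y j"
    and Pid: "\<forall>j\<in>G. \<forall>y\<in>Y j. P j y = y"
    and orth: "\<forall>i\<in>G. \<forall>j\<in>G. i \<noteq> j \<longrightarrow> (\<forall>x. P j (P i x) = 0)"
    and c0: "\<forall>x. \<forall>e>0. finite {j\<in>G. e \<le> norm (P j x)}"
    and bdd: "\<exists>C. \<forall>x. \<forall>j\<in>G. norm (P j x) \<le> C * norm x"
    and inj: "\<forall>x. (\<forall>j\<in>G. P j x = 0) \<longrightarrow> x = 0"
    and beta: "\<forall>x. x \<noteq> 0 \<longrightarrow> is_max_index P G x (\<beta> x)"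
  shows "bdd_above ((\<lambda>j. onorm (P j)) ` G)
    \<and> (\<exists>\<beta>'. \<forall>x. x \<noteq> 0 \<longrightarrow> is_max_index P G x (\<beta>' x))
    \<and> (\<forall>\<beta>'. (\<forall>x. x \<noteq> 0 \<longrightarrow> is_max_index P G x (\<beta>' x)) \<longrightarrow> Rmap P G \<beta>' = Rmap P G \<beta>)
    \<and> (\<forall>x. x \<noteq> 0 \<longrightarrow> Rmap P G \<beta> x \<in> (\<Union>j\<in>G. Y j))
    \<and> Rmap P G \<beta> \<circ> Rmap P G \<beta> = Rmap P G \<beta>
    \<and> (\<forall>y\<in>(\<Union>j\<in>G. Y j). Rmap P G \<beta> y = y)
    \<and> (\<forall>x y. norm (Rmap P G \<beta> x - Rmap P G \<beta> y)
             \<le> 3 * (SUP j\<in>G. onorm (P j)) * norm (x - y))"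
proof -
  obtain C where C: "\<forall>x. \<forall>j\<in>G. norm (P j x) \<le> C * norm x" using bdd by blast
  have onC: "onorm (P j) \<le> max C 0" if "j \<in> G" for j
  proof (rule onorm_bound)
    fix x :: 'a
    have "C * norm x \<le> max C 0 * norm x" by (rule mult_right_mono) auto
    thus "norm (P j x) \<le> max C 0 * norm x" using C that by (meson order_trans)
  qed simp
  have bddA: "bdd_above ((\<lambda>j. onorm (P j)) ` G)"
    by (rule bdd_aboveI[where M="max C 0"]) (use onC in auto)
  define A where "A = (SUP j\<in>G. onorm (P j))"
  have L: "\<forall>i\<in>G. \<forall>x y. norm (P i x - P i y) \<le> A * norm (x - y)"
  proof (intro ballI allI)
    fix i x y assume i: "i \<in> G"
    have bl: "bounded_linear (P i)" using lin i by auto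
    have "norm (P i x - P i y) = norm (P i (x - y))" using bl by (simp add: linear_simps)
    also have "\<dots> \<le> onorm (P i) * norm (x - y)" by (rule onorm[OF bl])
    also have "\<dots> \<le> A * norm (x - y)" unfolding A_def
      by (rule mult_right_mono[OF cSUP_upper[OF i bddA] norm_ge_zero])
    finally show "norm (P i x - P i y) \<le> A * norm (x - y)" .
  qed
  have P0: "\<forall>i\<in>G. P i 0 = 0" using lin by (simp add: linear_simps)
  let ?R = "Rmap P G \<beta>"
  have wd: "\<forall>\<beta>'. (\<forall>x. x \<noteq> 0 \<longrightarrow> is_max_index P G x (\<beta>' x)) \<longrightarrow> Rmap P G \<beta>' = ?R"
  proof (intro allI impI ext)
    fix \<beta>' x assume b': "\<forall>x. x \<noteq> 0 \<longrightarrow> is_max_index P G x (\<beta>' x)"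
    show "Rmap P G \<beta>' x = ?R x"
    proof (cases "x = 0 \<or> \<beta>' x = \<beta> x")
      case True thus ?thesis by (auto simp: Rmap_def)
    next
      case False
      hence xn: "x \<noteq> 0" and ne: "\<beta>' x \<noteq> \<beta> x" by auto
      have m1: "is_max_index P G x (\<beta>' x)" and m2: "is_max_index P G x (\<beta> x)" using b' beta xn by auto
      have G1: "\<beta>' x \<in> G" "\<beta> x \<in> G" using m1 m2 unfolding is_max_index_def by auto
      have eqn: "norm (P (\<beta>' x) x) = norm (P (\<beta> x) x)" using m1 m2 G1 unfolding is_max_index_def
        by (meson antisym)
      have "other_max P G x (\<beta>' x) = norm (P (\<beta>' x) x)"
        using om_bounds[OF m1] om_ge[OF m1 G1(2) ne[symmetric]] eqn by simp
      moreover have "other_max P G x (\<beta> x) = norm (P (\<beta> x) x)"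
        using om_bounds[OF m2] om_ge[OF m2 G1(1) ne] eqn by simp
      moreover have "0 < norm (P (\<beta> x) x)"
      proof (rule ccontr)
        assume "\<not> 0 < norm (P (\<beta> x) x)"
        hence "\<forall>j\<in>G. P j x = 0" using m2 unfolding is_max_index_def
          by (metis norm_le_zero_iff order_trans not_less)
        thus False using inj xn by auto
      qed
      ultimately show ?thesis using xn eqn by (simp add: Rmap_def)
    qed
  qed
  have inY: "\<forall>x. x \<noteq> 0 \<longrightarrow> ?R x \<in> (\<Union>j\<in>G. Y j)"
  proof (intro allI impI)
    fix x :: 'a assume xn: "x \<noteq> 0"
    have bG: "\<beta> x \<in> G" using beta xn unfolding is_max_index_def by auto
    have "P (\<beta> x) x \<in> Y (\<beta> x)" using Prange bG by auto
    hence "?R x \<in> Y (\<beta> x)" using Ysub bG xn unfolding Rmap_def by (simp add: subspace_scale)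
    thus "?R x \<in> (\<Union>j\<in>G. Y j)" using bG by auto
  qed
  have fixY: "\<forall>y\<in>(\<Union>j\<in>G. Y j). ?R y = y"
  proof
    fix y assume "y \<in> (\<Union>j\<in>G. Y j)"
    then obtain j where j: "j \<in> G" "y \<in> Y j" by auto
    show "?R y = y"
    proof (cases "y = 0")
      case True thus ?thesis by (simp add: Rmap_def)
    next
      case yn: False
      have Pj: "P j y = y" using Pid j by auto
      have Pi: "P i y = 0" if "i \<in> G" "i \<noteq> j" for i
        using orth j that Pj by metis
      have mb: "is_max_index P G y (\<beta> y)" using beta yn by auto
      have bj: "\<beta> y = j"
      proof (rule ccontr)
        assume "\<beta> y \<noteq> j"
        hence "P (\<beta> y) y = 0" using Pi mb unfolding is_max_index_def by auto
        hence "norm (P j y) \<le> 0" using mb j unfolding is_max_index_def by auto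
        thus False using Pj yn by simp
      qed
      have "other_max P G y j = 0"
      proof -
        have "insert 0 ((\<lambda>i. norm (P i y)) ` (G - {j})) = {0}" using Pi by auto
        thus ?thesis unfolding other_max_def by (metis cSup_singleton)
      qed
      thus ?thesis using yn bj Pj by (simp add: Rmap_def)
    qed
  qed
  have idem: "?R \<circ> ?R = ?R"
  proof
    fix x show "(?R \<circ> ?R) x = ?R x"
    proof (cases "x = 0")
      case True thus ?thesis by (simp add: Rmap_def)
    next
      case False
      hence "?R x \<in> (\<Union>j\<in>G. Y j)" using inY by blast
      hence "?R (?R x) = ?R x" using fixY by blast
      thus ?thesis by simp
    qed
  qed
  have lip: "\<forall>x y. norm (?R x - ?R y) \<le> 3 * (SUP j\<in>G. onorm (P j)) * norm (x - y)"
    using Rmap_lip[OF beta inj L P0] unfolding A_def by blast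
  show ?thesis using bddA beta wd inY idem fixY lip by blast
qed

end
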